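(* Let $z_1,\dots,z_n$ be a stream of elements sampled into a buffer $B$ of size $s$ using the RS-x algorithm (described below). Then at any time $t\ge s+2$, the $s$ elements of the buffer are independent, and each is a uniformly random sample (with replacement) from $\{z_1,\dots,z_{t-1}\}$; i.e. the buffer consists of $s$ i.i.d. samples from $\{z_1,\dots,z_{t-1}\}$.
   Context: RS-x update when the point $z_t$ arrives at step $t$: if $|B|<s$, add $z_t$ to $B$; else if $t=s+1$, replace $B$ by $s$ points sampled uniformly with replacement from $B\cup\{z_t\}$; else (for $t>s+1$) independently replace each of the $s$ buffer entries by $z_t$ with probability $1/t$. The buffer at time $t$ means the buffer after the updates with $z_1,\dots,z_{t-1}$ (before $z_t$ is processed); probabilities are over the randomness of the update rule, for a fixed stream. *)

theory Defs
  imports "HOL-Probability.Probability"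
begin

fun seq_pmf :: "'a pmf list \<Rightarrow> 'a list pmf" where
  "seq_pmf [] = return_pmf []"
| "seq_pmf (p # ps) = bind_pmf p (\<lambda>x. bind_pmf (seq_pmf ps) (\<lambda>xs. return_pmf (x # xs)))"

definition iid_pmf :: "nat \<Rightarrow> 'a pmf \<Rightarrow> 'a list pmf" where
  "iid_pmf k p = seq_pmf (replicate k p)"

definition rsx_step :: "nat \<Rightarrow> nat \<Rightarrow> 'a \<Rightarrow> 'a list \<Rightarrow> 'a list pmf" where
  "rsx_step s t zt B =
     (if length B < s then return_pmf (B @ [zt])
      else if t = s + 1 then
        iid_pmf s (map_pmf (\<lambda>i. (B @ [zt]) ! i) (pmf_of_set {..<length B + 1}))
      else seq_pmf (map (\<lambda>b. map_pmf (\<lambda>c. if c then zt else b) (bernoulli_pmf (1 / real t))) B))"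

text \<open>Distribution of the buffer at time t, i.e. after processing z 1, ..., z (t-1).\<close>
primrec rsx_buffer :: "nat \<Rightarrow> (nat \<Rightarrow> 'a) \<Rightarrow> nat \<Rightarrow> 'a list pmf" where
  "rsx_buffer s z 0 = return_pmf []"
| "rsx_buffer s z (Suc t) =
     (if t = 0 then return_pmf [] else bind_pmf (rsx_buffer s z t) (rsx_step s t (z t)))"

end

theory Submission imports Defs begin

lemma mix:
  assumes "2 \<le> t"
  shows "bind_pmf (pmf_of_set {1..<t}) (\<lambda>i. map_pmf (\<lambda>c. if c then t else i) (bernoulli_pmf (1 / real t)))
         = pmf_of_set {1..t}"
proof (rule pmf_eqI)
  fix j
  have ne: "{1..<t} \<noteq> {}" using assms by auto
  have p0: "0 \<le> 1 / real t" "1 / real t \<le> 1" using assms by auto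
  have m: "\<And>i. map_pmf (\<lambda>c. if c then t else i) (bernoulli_pmf (1 / real t))
      = bind_pmf (bernoulli_pmf (1 / real t)) (\<lambda>c. return_pmf (if c then t else i))"
    by (simp add: map_pmf_def)
  have "pmf (bind_pmf (pmf_of_set {1..<t}) (\<lambda>i. map_pmf (\<lambda>c. if c then t else i) (bernoulli_pmf (1 / real t)))) j
     = (\<Sum>i\<in>{1..<t}. indicator {j} t * (1 / real t) + indicator {j} i * (1 - 1 / real t)) / real (t - 1)"
    using ne p0 by (simp add: m pmf_bind integral_pmf_of_set pmf_return)
  also have "\<dots> = pmf (pmf_of_set {1..t}) j"
  proof -
    consider "j = t" | "j \<in> {1..<t}" | "j \<notin> {1..t}" by fastforce
    then show ?thesis
    proof cases
      case 1 then show ?thesis using assms by (simp add: indicator_def of_nat_diff)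
    next
      case 2
      then have "(\<Sum>i\<in>{1..<t}. indicator {j} t * (1 / real t) + indicator {j} i * (1 - 1 / real t)) = (1 - 1 / real t)"
        by (simp add: indicator_def sum.delta)
      then show ?thesis using 2 assms by (simp add: of_nat_diff field_simps)
    next
      case 3
      then have "(\<Sum>i\<in>{1..<t}. indicator {j} t * (1 / real t) + indicator {j} i * (1 - 1 / real t)) = (0::real)"
        by (intro sum.neutral) (auto simp: indicator_def)
      then show ?thesis using 3 assms by (simp add: indicator_def)
    qed
  qed
  finally show "pmf (bind_pmf (pmf_of_set {1..<t}) (\<lambda>i. map_pmf (\<lambda>c. if c then t else i) (bernoulli_pmf (1 / real t)))) j = pmf (pmf_of_set {1..t}) j" .
qed

lemma seq_iid:
  "bind_pmf (seq_pmf (replicate k p)) (\<lambda>B. seq_pmf (map f B)) = seq_pmf (replicate k (bind_pmf p f))"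
proof (induction k)
  case 0 then show ?case by (simp add: bind_return_pmf)
next
  case (Suc k)
  have "seq_pmf (replicate (Suc k) (bind_pmf p f)) =
     bind_pmf p (\<lambda>x. bind_pmf (f x) (\<lambda>y. bind_pmf (seq_pmf (replicate k p)) (\<lambda>xs. bind_pmf (seq_pmf (map f xs)) (\<lambda>ys. return_pmf (y # ys)))))"
    by (simp add: Suc.IH[symmetric] bind_assoc_pmf)
  also have "\<dots> = bind_pmf p (\<lambda>x. bind_pmf (seq_pmf (replicate k p)) (\<lambda>xs. bind_pmf (f x) (\<lambda>y. bind_pmf (seq_pmf (map f xs)) (\<lambda>ys. return_pmf (y # ys)))))"
    by (subst bind_commute_pmf) (rule refl)
  finally show ?case by (simp add: bind_assoc_pmf bind_return_pmf)
qed

lemma set_seq_len: "xs \<in> set_pmf (seq_pmf (replicate k p)) \<Longrightarrow> length xs = k"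
  by (induction k arbitrary: xs) auto

lemma early: "1 \<le> t \<Longrightarrow> t \<le> s + 1 \<Longrightarrow> rsx_buffer s z t = return_pmf (map z [1..<t])"
proof (induction t)
  case 0 then show ?case by simp
next
  case (Suc t)
  show ?case
  proof (cases "t = 0")
    case True then show ?thesis by simp
  next
    case False
    then show ?thesis using Suc by (simp add: bind_return_pmf rsx_step_def)
  qed
qed

lemma first_draw:
  "map_pmf (\<lambda>i. (map z [1..<s+1] @ [z (s+1)]) ! i) (pmf_of_set {..<s + 1})
   = map_pmf z (pmf_of_set {1..<s+2})"
proof -
  have "pmf_of_set {1..<s+2} = map_pmf Suc (pmf_of_set {..<s+1})"
    by (subst map_pmf_of_set_inj) (auto simp: image_Suc_lessThan atLeastLessThanSuc_atLeastAtMost)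
  moreover have "map_pmf (\<lambda>i. (map z [1..<s+1] @ [z (s+1)]) ! i) (pmf_of_set {..<s + 1})
     = map_pmf (\<lambda>i. z (Suc i)) (pmf_of_set {..<s + 1})"
  proof (rule map_pmf_cong[OF refl])
    fix i assume "i \<in> set_pmf (pmf_of_set {..<s + 1})"
    then have "i < s + 1" by (subst (asm) set_pmf_of_set) auto
    then show "(map z [1..<s+1] @ [z (s+1)]) ! i = z (Suc i)"
    proof (cases "i < s")
      case True
      have "[1..<s+1] ! i = 1 + i" using True by (intro nth_upt) simp
      then show ?thesis using True by (simp add: nth_append del: upt_Suc)
    next
      case False
      then have "i = s" using \<open>i < s + 1\<close> by simp
      then show ?thesis by (simp add: nth_append del: upt_Suc)
    qed
  qed
  ultimately show ?thesis
    by (simp add: pmf.map_comp o_def)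
qed

lemma step1: "length B = s \<Longrightarrow> rsx_step s (s+1) zt B = iid_pmf s (map_pmf (\<lambda>i. (B @ [zt]) ! i) (pmf_of_set {..<s + 1}))"
  by (simp add: rsx_step_def)

lemma main: "s + 2 \<le> t \<Longrightarrow> rsx_buffer s z t = iid_pmf s (map_pmf z (pmf_of_set {1..<t}))"
proof (induction t)
  case 0 then show ?case by simp
next
  case (Suc t)
  show ?case
  proof (cases "t = s + 1")
    case True
    have "rsx_buffer s z (Suc t) = bind_pmf (return_pmf (map z [1..<s+1])) (rsx_step s t (z t))"
      using True early[of "s+1" s z] by simp
    also have "\<dots> = rsx_step s (s+1) (z (s+1)) (map z [1..<s+1])"
      using True by (simp only: bind_return_pmf)
    also have "\<dots> = iid_pmf s (map_pmf (\<lambda>i. (map z [1..<s+1] @ [z (s+1)]) ! i) (pmf_of_set {..<s + 1}))"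
      by (rule step1) simp
    also have "\<dots> = iid_pmf s (map_pmf z (pmf_of_set {1..<s+2}))"
      by (simp only: first_draw)
    finally show ?thesis using True by simp
  next
    case False
    then have t2: "s + 2 \<le> t" "t \<noteq> 0" using Suc.prems by auto
    have "rsx_buffer s z (Suc t) = bind_pmf (iid_pmf s (map_pmf z (pmf_of_set {1..<t}))) (rsx_step s t (z t))"
      using t2 Suc.IH by simp
    also have "\<dots> = bind_pmf (iid_pmf s (map_pmf z (pmf_of_set {1..<t})))
       (\<lambda>B. seq_pmf (map (\<lambda>b. map_pmf (\<lambda>c. if c then z t else b) (bernoulli_pmf (1 / real t))) B))"
      using t2 by (intro bind_pmf_cong refl) (auto simp: rsx_step_def iid_pmf_def dest: set_seq_len)
    also have "\<dots> = iid_pmf s (bind_pmf (map_pmf z (pmf_of_set {1..<t}))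
                 (\<lambda>b. map_pmf (\<lambda>c. if c then z t else b) (bernoulli_pmf (1 / real t))))"
      by (simp add: iid_pmf_def seq_iid)
    also have "bind_pmf (map_pmf z (pmf_of_set {1..<t}))
                 (\<lambda>b. map_pmf (\<lambda>c. if c then z t else b) (bernoulli_pmf (1 / real t)))
             = map_pmf z (bind_pmf (pmf_of_set {1..<t}) (\<lambda>i. map_pmf (\<lambda>c. if c then t else i) (bernoulli_pmf (1 / real t))))"
      by (simp add: bind_map_pmf map_bind_pmf pmf.map_comp o_def if_distrib)
    also have "\<dots> = map_pmf z (pmf_of_set {1..<Suc t})"
      using t2 mix[of t] by (simp add: atLeastLessThanSuc_atLeastAtMost)
    finally show ?thesis .
  qed
qed

theorem theorem19:
  fixes s n t :: nat and z :: "nat \<Rightarrow> 'a"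
  assumes "s + 2 \<le> t" and "t \<le> n"
  shows "rsx_buffer s z t = iid_pmf s (map_pmf z (pmf_of_set {1..<t}))"
  using main assms(1) by blast

end
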